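(* Let $G$ be a graph and $F\subseteq E(G)$ such that $G/F$ is a cactus, and let $\mathcal{W}$ be the $G/F$-witness structure of $G$. Then there exists a coloring $f:V(G)\to\{1,2,3\}$ that is compatible with $\mathcal{W}$.
   Context: A cactus is a connected graph in which every edge lies in at most one cycle. For $F\subseteq E(G)$, $G/F$ is the graph whose vertices correspond to the parts of the partition of $V(G)$ into the vertex sets of connected components of $(V(F),F)$ and singletons $\{v\}$ for $v\notin V(F)$, two parts adjacent iff some edge of $G$ joins them; this partition is the $G/F$-witness structure $\mathcal{W}$, and the part corresponding to vertex $t$ of $T=G/F$ is denoted $W(t)$. A witness set is big if it has at least two vertices, singleton otherwise. A cable path in a graph $H$ is a path $(v_1,\dots,v_q)$ such that for each $2\le i\le q-1$, $N_H(v_i)=\{v_{i-1},v_{i+1}\}$. A coloring $f:V(G)\to\{1,2,3\}$ is compatible with the $T$-witness structure $\mathcal{W}$ if: (1) every witness set $W(t)$ is monochromatic (so $f(W(t))$ is well defined); (2) for every edge $t_xt_y\in E(T)$ with $W(t_x),W(t_y)$ both big, $f(W(t_x))\ne f(W(t_y))$; (3) for every cable path $(t_x,t_1,\dots,t_q,t_y)$ in $T$ ($q\ge1$) with $W(t_x),W(t_y)$ big and all $W(t_i)$ ($1\le i\le q$) singleton, $f(W(t_x))\neq f(W(t_1))$ and $f(W(t_y))\ne f(W(t_q))$. *)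

theory Defs
  imports Main
begin

definition graph :: "'a set \<Rightarrow> 'a set set \<Rightarrow> bool" where
  "graph V E \<longleftrightarrow> finite V \<and> (\<forall>e\<in>E. \<exists>u v. e = {u, v} \<and> u \<noteq> v \<and> u \<in> V \<and> v \<in> V)"

definition adj_rel :: "'a set set \<Rightarrow> ('a \<times> 'a) set" where
  "adj_rel E = {(u, v). {u, v} \<in> E}"

definition nbhd :: "'a set set \<Rightarrow> 'a \<Rightarrow> 'a set" where
  "nbhd E v = {u. {u, v} \<in> E}"

definition connected_graph :: "'a set \<Rightarrow> 'a set set \<Rightarrow> bool" where
  "connected_graph V E \<longleftrightarrow> (\<forall>u\<in>V. \<forall>v\<in>V. (u, v) \<in> (adj_rel E)\<^sup>*)"

definition cycle_edges :: "'a list \<Rightarrow> 'a set set" where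
  "cycle_edges vs = {{vs ! i, vs ! ((i + 1) mod length vs)} | i. i < length vs}"

definition is_cycle :: "'a set \<Rightarrow> 'a set set \<Rightarrow> 'a set set \<Rightarrow> bool" where
  "is_cycle V E C \<longleftrightarrow> (\<exists>vs. length vs \<ge> 3 \<and> distinct vs \<and> set vs \<subseteq> V
       \<and> cycle_edges vs \<subseteq> E \<and> C = cycle_edges vs)"

definition cactus :: "'a set \<Rightarrow> 'a set set \<Rightarrow> bool" where
  "cactus V E \<longleftrightarrow> graph V E \<and> connected_graph V E \<and>
     (\<forall>e\<in>E. \<forall>C1 C2. is_cycle V E C1 \<and> is_cycle V E C2 \<and> e \<in> C1 \<and> e \<in> C2 \<longrightarrow> C1 = C2)"

text \<open>Witness set of v in G/F: the vertex set of the component of (V(F),F) containing v,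
  or {v} if v is not covered by F.\<close>
definition witness_set :: "'a set \<Rightarrow> 'a set set \<Rightarrow> 'a \<Rightarrow> 'a set" where
  "witness_set V F v = {u \<in> V. (v, u) \<in> (adj_rel F)\<^sup>*}"

text \<open>The G/F-witness structure; the vertices of G/F are identified with the witness sets,
  so W(t) = t.\<close>
definition witness_structure :: "'a set \<Rightarrow> 'a set set \<Rightarrow> 'a set set" where
  "witness_structure V F = witness_set V F ` V"

definition contr_edges :: "'a set \<Rightarrow> 'a set set \<Rightarrow> 'a set set \<Rightarrow> 'a set set set" where
  "contr_edges V E F = {{X, Y} | X Y. X \<in> witness_structure V F \<and> Y \<in> witness_structure V F
      \<and> X \<noteq> Y \<and> (\<exists>x\<in>X. \<exists>y\<in>Y. {x, y} \<in> E)}"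

definition big :: "'a set \<Rightarrow> bool" where
  "big X \<longleftrightarrow> card X \<ge> 2"

definition cable_path :: "'b set \<Rightarrow> 'b set set \<Rightarrow> 'b list \<Rightarrow> bool" where
  "cable_path VH EH p \<longleftrightarrow> p \<noteq> [] \<and> distinct p \<and> set p \<subseteq> VH
     \<and> (\<forall>i. i + 1 < length p \<longrightarrow> {p ! i, p ! (i + 1)} \<in> EH)
     \<and> (\<forall>i. 0 < i \<and> i + 1 < length p \<longrightarrow> nbhd EH (p ! i) = {p ! (i - 1), p ! (i + 1)})"

definition compatible :: "'a set \<Rightarrow> 'a set set \<Rightarrow> 'a set set \<Rightarrow> ('a \<Rightarrow> nat) \<Rightarrow> bool" where
  "compatible V E F f \<longleftrightarrow>
     (\<forall>W\<in>witness_structure V F. \<forall>x\<in>W. \<forall>y\<in>W. f x = f y)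
   \<and> (\<forall>X Y. {X, Y} \<in> contr_edges V E F \<and> big X \<and> big Y \<longrightarrow> (\<forall>x\<in>X. \<forall>y\<in>Y. f x \<noteq> f y))
   \<and> (\<forall>p. cable_path (witness_structure V F) (contr_edges V E F) p \<and> length p \<ge> 3
         \<and> big (hd p) \<and> big (last p) \<and> (\<forall>i. 0 < i \<and> i + 1 < length p \<longrightarrow> \<not> big (p ! i))
         \<longrightarrow> (\<forall>x\<in>p ! 0. \<forall>y\<in>p ! 1. f x \<noteq> f y)
           \<and> (\<forall>x\<in>p ! (length p - 1). \<forall>y\<in>p ! (length p - 2). f x \<noteq> f y))"

end

theory Submission
  imports Defs
begin

definition cyc_uniq :: "'b set \<Rightarrow> 'b set set \<Rightarrow> bool" where
  "cyc_uniq V E \<longleftrightarrow> (\<forall>e\<in>E. \<forall>C1 C2. is_cycle V E C1 \<and> is_cycle V E C2 \<and> e \<in> C1 \<and> e \<in> C2 \<longrightarrow> C1 = C2)"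

definition gpath :: "'b set \<Rightarrow> 'b set set \<Rightarrow> 'b list \<Rightarrow> bool" where
  "gpath V E ps \<longleftrightarrow> ps \<noteq> [] \<and> distinct ps \<and> set ps \<subseteq> V \<and> (\<forall>i. i + 1 < length ps \<longrightarrow> {ps ! i, ps ! (i + 1)} \<in> E)"

lemma prefix_cycle:
  assumes "gpath V E ps" "2 \<le> k" "k < length ps" "{ps!k, ps!0} \<in> E"
  shows "is_cycle V E (cycle_edges (take (Suc k) ps))"
proof -
  let ?vs = "take (Suc k) ps"
  have len: "length ?vs = Suc k" using assms by simp
  have "cycle_edges ?vs \<subseteq> E"
  proof
    fix e assume "e \<in> cycle_edges ?vs"
    then obtain i where i: "i < Suc k" "e = {?vs!i, ?vs!((i+1) mod Suc k)}"
      unfolding cycle_edges_def len by auto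
    show "e \<in> E"
    proof (cases "i < k")
      case True
      then have "(i+1) mod Suc k = i+1" by simp
      with i True assms(1,3) show ?thesis unfolding gpath_def by auto
    next
      case False then have "i = k" using i by simp
      then show ?thesis using i assms by simp
    qed
  qed
  moreover have "set ?vs \<subseteq> V" using assms(1) set_take_subset[of "Suc k" ps] unfolding gpath_def by blast
  moreover have "distinct ?vs" using assms(1) unfolding gpath_def by simp
  ultimately show ?thesis unfolding is_cycle_def using len assms(2) by (intro exI[of _ ?vs]) auto
qed

lemma first_edge: "2 \<le> k \<Longrightarrow> k < length ps \<Longrightarrow> {ps!0, ps!1} \<in> cycle_edges (take (Suc k) ps)"
  unfolding cycle_edges_def
  by (rule CollectI, rule exI[of _ 0]) simp

lemma closing_edge: "k < length ps \<Longrightarrow> {ps!0, ps!k} \<in> cycle_edges (take (Suc k) ps)"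
  unfolding cycle_edges_def
  by (rule CollectI, rule exI[of _ k]) (simp add: insert_commute)

lemma cycle_edges_sub: "e \<in> cycle_edges vs \<Longrightarrow> e \<subseteq> set vs"
  proof
  fix x assume "e \<in> cycle_edges vs" "x \<in> e"
  then obtain i where i: "i < length vs" "x = vs ! i \<or> x = vs ! ((i+1) mod length vs)"
    unfolding cycle_edges_def by auto
  then have "0 < length vs" using i(1) by linarith
  then have "(i+1) mod length vs < length vs" by simp
  then show "x \<in> set vs" using i by auto
qed

lemma two_cycles:
  assumes "gpath V E ps" "cyc_uniq V E" "2 \<le> ia" "ia < ib" "ib < length ps"
    "{ps!ia, ps!0} \<in> E" "{ps!ib, ps!0} \<in> E"
  shows False
proof -
  let ?C1 = "cycle_edges (take (Suc ia) ps)"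
  let ?C2 = "cycle_edges (take (Suc ib) ps)"
  have ial: "ia < length ps" using assms(4,5) by linarith
  have ib2: "2 \<le> ib" using assms(3,4) by linarith
  have c1: "is_cycle V E ?C1" by (rule prefix_cycle[OF assms(1,3) ial assms(6)])
  have c2: "is_cycle V E ?C2" by (rule prefix_cycle[OF assms(1) ib2 assms(5) assms(7)])
  have "0 + 1 < length ps" using assms(3,4,5) by linarith
  then have e: "{ps!0, ps!(0+1)} \<in> E" using assms(1) unfolding gpath_def by blast
  then have e: "{ps!0, ps!1} \<in> E" by simp
  have "{ps!0, ps!1} \<in> ?C1" by (rule first_edge[OF assms(3) ial])
  moreover have "{ps!0, ps!1} \<in> ?C2" by (rule first_edge[OF ib2 assms(5)])
  ultimately have eq: "?C1 = ?C2" using assms(2) c1 c2 e unfolding cyc_uniq_def by blast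
  have "{ps!0, ps!ib} \<in> ?C2" using closing_edge assms(5) .
  then have "{ps!0, ps!ib} \<subseteq> set (take (Suc ia) ps)" using eq cycle_edges_sub by metis
  then have "ps!ib \<in> set (take (Suc ia) ps)" by blast
  then obtain j where j: "j < length (take (Suc ia) ps)" "take (Suc ia) ps ! j = ps ! ib"
    by (metis in_set_conv_nth)
  then have "j \<le> ia" "j < length ps" "ps ! j = ps ! ib" by auto
  moreover have "distinct ps" using assms(1) unfolding gpath_def by simp
  ultimately show False using assms(4,5) nth_eq_iff_index_eq[of ps j ib] by auto
qed

lemma card_two: "finite A \<Longrightarrow> 2 \<le> card A \<Longrightarrow> \<exists>a b. a \<in> A \<and> b \<in> A \<and> a \<noteq> b"
  by (metis One_nat_def card.empty card_le_Suc0_iff_eq not_less_eq_eq numeral_2_eq_2 zero_le)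

lemma low_deg:
  assumes g: "graph V E" and ne: "V \<noteq> {}" and cu: "cyc_uniq V E"
  shows "\<exists>x\<in>V. card (nbhd E x) \<le> 2"
proof -
  have fin: "finite V" using g unfolding graph_def by simp
  obtain v where v: "v \<in> V" using ne by blast
  have p0: "gpath V E [v]" using v unfolding gpath_def by simp
  have bound: "\<forall>ps. gpath V E ps \<longrightarrow> length ps < Suc (card V)"
  proof (intro allI impI)
    fix ps assume "gpath V E ps"
    then have "distinct ps" "set ps \<subseteq> V" unfolding gpath_def by auto
    then have "card (set ps) \<le> card V" using card_mono[OF fin] by blast
    then show "length ps < Suc (card V)" using distinct_card[OF \<open>distinct ps\<close>] by simp
  qed
  obtain ps where ps: "gpath V E ps" and mx: "\<forall>qs. gpath V E qs \<longrightarrow> length qs \<le> length ps"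
    using ex_has_greatest_nat[of "gpath V E" "[v]" length, OF p0 bound] by blast
  let ?x = "ps!0"
  have psne: "ps \<noteq> []" and dps: "distinct ps" and sps: "set ps \<subseteq> V"
    and eps: "\<forall>i. i + 1 < length ps \<longrightarrow> {ps ! i, ps ! (i + 1)} \<in> E"
    using ps unfolding gpath_def by auto
  have xV: "?x \<in> V" using psne sps by (simp add: subset_iff)
  have nsub: "nbhd E ?x \<subseteq> set ps"
  proof
    fix u assume u: "u \<in> nbhd E ?x"
    then have ue: "{u, ?x} \<in> E" unfolding nbhd_def by simp
    then obtain a b where ab: "{u, ?x} = {a, b}" "a \<in> V" "b \<in> V" using g unfolding graph_def by blast
    then have uV: "u \<in> V" by (metis doubleton_eq_iff)
    show "u \<in> set ps"
    proof (rule ccontr)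
      assume nu: "u \<notin> set ps"
      have "gpath V E (u # ps)" unfolding gpath_def
      proof (intro conjI allI impI)
        show "distinct (u # ps)" using nu dps by simp
        show "set (u # ps) \<subseteq> V" using uV sps by simp
      next
        fix i assume i: "i + 1 < length (u # ps)"
        show "{(u # ps) ! i, (u # ps) ! (i + 1)} \<in> E"
        proof (cases i)
          case 0 then show ?thesis using ue by simp
        next
          case (Suc j) then show ?thesis using i eps by simp
        qed
      qed simp
      then show False using mx by fastforce
    qed
  qed
  have finN: "finite (nbhd E ?x)" using nsub finite_subset by blast
  show ?thesis
  proof (rule ccontr)
    assume "\<not> ?thesis"
    then have c3: "card (nbhd E ?x) > 2" using xV by force
    have "card (nbhd E ?x - {ps!1}) \<ge> 2" using c3 by (auto simp add: card_Diff_singleton_if)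
    then obtain a b where ab: "a \<in> nbhd E ?x - {ps!1}" "b \<in> nbhd E ?x - {ps!1}" "a \<noteq> b"
      using card_two[of "nbhd E ?x - {ps!1}"] finN by blast
    have idx: "\<exists>i. 2 \<le> i \<and> i < length ps \<and> ps ! i = c \<and> {ps!i, ps!0} \<in> E"
      if c: "c \<in> nbhd E ?x - {ps!1}" for c
    proof -
      have ce: "{c, ?x} \<in> E" using c unfolding nbhd_def by simp
      then have "c \<noteq> ?x" using g unfolding graph_def by (metis doubleton_eq_iff insert_absorb2)
      moreover obtain i where "i < length ps" "ps ! i = c" using c nsub by (metis DiffD1 in_set_conv_nth subsetD)
      moreover have "c \<noteq> ps!1" using c by simp
      ultimately have "2 \<le> i" "i < length ps" "ps ! i = c"
        by (metis One_nat_def less_2_cases not_le)+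
      then show ?thesis using ce by blast
    qed
    obtain ia where ia: "2 \<le> ia" "ia < length ps" "ps ! ia = a" "{ps!ia, ps!0} \<in> E" using idx ab(1) by blast
    obtain ib where ib: "2 \<le> ib" "ib < length ps" "ps ! ib = b" "{ps!ib, ps!0} \<in> E" using idx ab(2) by blast
    have "ia \<noteq> ib" using ia ib ab by auto
    then show False
      using two_cycles[OF ps cu ia(1) _ ib(2) ia(4) ib(4)] two_cycles[OF ps cu ib(1) _ ia(2) ib(4) ia(4)]
      by (meson linorder_neqE_nat)
  qed
qed

lemma edge_neq: assumes "graph V E" "{u,v} \<in> E" shows "u \<noteq> v"
proof
  assume "u = v"
  obtain a b where "{u,v} = {a,b}" "a \<noteq> b" using assms unfolding graph_def by blast
  then show False using \<open>u = v\<close> by (metis doubleton_eq_iff)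
qed

lemma nbhd_sub: assumes "graph V E" shows "nbhd E x \<subseteq> V"
proof
  fix u assume "u \<in> nbhd E x"
  then have "{u,x} \<in> E" unfolding nbhd_def by simp
  then obtain a b where "{u,x} = {a,b}" "a \<in> V" "b \<in> V" using assms unfolding graph_def by blast
  then show "u \<in> V" by (metis doubleton_eq_iff)
qed

lemma color3_aux:
  "\<forall>V E. card (V :: 'v set) = n \<longrightarrow> graph V E \<longrightarrow> cyc_uniq V E \<longrightarrow>
    (\<exists>c. (\<forall>v\<in>V. c v \<in> {1,2,3::nat}) \<and> (\<forall>u v. {u,v} \<in> E \<longrightarrow> c u \<noteq> c v))"
proof (induction n rule: less_induct)
  case (less n)
  show ?case
  proof (intro allI impI)
    fix V :: "'v set" and E assume cV: "card V = n" and g: "graph V E" and cu: "cyc_uniq V E"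
    have fin: "finite V" using g unfolding graph_def by simp
    show "\<exists>c. (\<forall>v\<in>V. c v \<in> {1,2,3::nat}) \<and> (\<forall>u v. {u,v} \<in> E \<longrightarrow> c u \<noteq> c v)"
    proof (cases "V = {}")
      case True
      then have "E = {}" using g unfolding graph_def by auto
      then show ?thesis using True by (intro exI[of _ "\<lambda>_. 1"]) simp
    next
      case False
      obtain x where xV: "x \<in> V" and dx: "card (nbhd E x) \<le> 2" using low_deg[OF g False cu] by blast
      let ?V = "V - {x}" let ?E = "{e \<in> E. x \<notin> e}"
      have g': "graph ?V ?E" using g fin unfolding graph_def by fastforce
      have cyc: "is_cycle ?V ?E C \<Longrightarrow> is_cycle V E C" for C unfolding is_cycle_def by blast
      have cu': "cyc_uniq ?V ?E" using cu cyc unfolding cyc_uniq_def by blast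
      have "card ?V < n" using cV xV fin by (metis card_Diff1_less)
      then obtain c where c1: "\<forall>v\<in>?V. c v \<in> {1,2,3::nat}" and c2: "\<forall>u v. {u,v} \<in> ?E \<longrightarrow> c u \<noteq> c v"
        using less.IH[rule_format, of "card ?V" ?V ?E, OF \<open>card ?V < n\<close> refl g' cu'] by blast
      have finN: "finite (nbhd E x)"
        using nbhd_sub[OF g, of x] fin finite_subset by blast
      have "card (c ` nbhd E x) \<le> 2" using card_image_le[OF finN, of c] dx by linarith
      then have "\<not> {1,2,3::nat} \<subseteq> c ` nbhd E x"
      proof (intro notI)
        assume sub: "{1,2,3::nat} \<subseteq> c ` nbhd E x"
        have "card {1,2,3::nat} \<le> card (c ` nbhd E x)" by (rule card_mono[OF finite_imageI[OF finN] sub])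
        moreover assume "card (c ` nbhd E x) \<le> 2"
        ultimately show False by simp
      qed
      then obtain k where k: "k \<in> {1,2,3::nat}" "k \<notin> c ` nbhd E x" by blast
      show ?thesis
      proof (intro exI[of _ "c(x := k)"] conjI allI impI ballI)
        fix v assume "v \<in> V" then show "(c(x := k)) v \<in> {1,2,3}" using c1 k by auto
      next
        fix u v assume uv: "{u, v} \<in> E"
        have "u \<noteq> v" by (rule edge_neq[OF g uv])
        moreover have "u = x \<Longrightarrow> v \<in> nbhd E x" using uv unfolding nbhd_def by (simp add: insert_commute)
        moreover have "v = x \<Longrightarrow> u \<in> nbhd E x" using uv unfolding nbhd_def by simp
        moreover have "u \<noteq> x \<Longrightarrow> v \<noteq> x \<Longrightarrow> c u \<noteq> c v" using c2 uv by auto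
        ultimately have "u = x \<Longrightarrow> c v \<noteq> k" "v = x \<Longrightarrow> c u \<noteq> k"
          "u \<noteq> x \<Longrightarrow> v \<noteq> x \<Longrightarrow> c u \<noteq> c v" "u \<noteq> v"
          using k(2) by (blast intro: imageI)+
        then show "(c(x := k)) u \<noteq> (c(x := k)) v" by auto
      qed
    qed
  qed
qed

lemma adj_sym: "(u, v) \<in> (adj_rel F)\<^sup>* \<Longrightarrow> (v, u) \<in> (adj_rel F)\<^sup>*"
proof (induction rule: rtrancl_induct)
  case base then show ?case by simp
next
  case (step y z)
  then have "(z, y) \<in> adj_rel F" unfolding adj_rel_def by (simp add: insert_commute)
  then show ?case using step by (meson converse_rtrancl_into_rtrancl)
qed

lemma ws_eq: "y \<in> witness_set V F w \<Longrightarrow> witness_set V F y = witness_set V F w"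
proof -
  assume y: "y \<in> witness_set V F w"
  then have wy: "(w, y) \<in> (adj_rel F)\<^sup>*" unfolding witness_set_def by simp
  have yw: "(y, w) \<in> (adj_rel F)\<^sup>*" by (rule adj_sym[OF wy])
  show ?thesis unfolding witness_set_def
    by (auto intro: rtrancl_trans[OF wy] rtrancl_trans[OF yw])
qed

theorem lemma3p1:
  fixes V :: "'a set" and E F :: "'a set set"
  assumes "graph V E"
    and "F \<subseteq> E"
    and "cactus (witness_structure V F) (contr_edges V E F)"
  shows "\<exists>f :: 'a \<Rightarrow> nat. (\<forall>v\<in>V. f v \<in> {1, 2, 3}) \<and> compatible V E F f"
proof -
  let ?VT = "witness_structure V F" and ?ET = "contr_edges V E F"
  have gT: "graph ?VT ?ET" and cuT: "cyc_uniq ?VT ?ET"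
    using assms(3) unfolding cactus_def cyc_uniq_def by auto
  obtain c where c1: "\<forall>X\<in>?VT. c X \<in> {1,2,3::nat}" and c2: "\<forall>X Y. {X,Y} \<in> ?ET \<longrightarrow> c X \<noteq> c Y"
    using color3_aux[rule_format, OF refl gT cuT] by blast
  define f where "f v = c (witness_set V F v)" for v
  have fw: "W \<in> ?VT \<Longrightarrow> x \<in> W \<Longrightarrow> f x = c W" for W x
  proof -
    assume W: "W \<in> ?VT" and x: "x \<in> W"
    then obtain w where "W = witness_set V F w" unfolding witness_structure_def by blast
    then show "f x = c W" using ws_eq[of x V F w] x unfolding f_def by simp
  qed
  have adj: "X \<in> ?VT \<and> Y \<in> ?VT" if "{X,Y} \<in> ?ET" for X Y
  proof -
    have "\<forall>e\<in>?ET. \<exists>u v. e = {u, v} \<and> u \<noteq> v \<and> u \<in> ?VT \<and> v \<in> ?VT"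
      using gT unfolding graph_def by (rule conjunct2)
    then have "\<exists>u v. {X,Y} = {u, v} \<and> u \<noteq> v \<and> u \<in> ?VT \<and> v \<in> ?VT" using that by (rule bspec)
    then obtain a b where ab: "{X,Y} = {a,b} \<and> a \<noteq> b \<and> a \<in> ?VT \<and> b \<in> ?VT" by iprover
    have eq: "{X,Y} = {a,b}" using ab by (rule conjunct1)
    have "X \<in> {a,b}" using eq insertI1[of X "{Y}"] by (rule subst)
    moreover have "Y \<in> {a,b}" using eq insertI2[OF singletonI, of Y X] by (rule subst)
    ultimately have "X \<in> {a,b}" "Y \<in> {a,b}" by blast+
    then show ?thesis using ab by auto
  qed
  have sep: "\<forall>x\<in>X. \<forall>y\<in>Y. f x \<noteq> f y" if "{X,Y} \<in> ?ET" for X Y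
  proof (intro ballI)
    fix x y assume "x \<in> X" "y \<in> Y"
    then have "f x = c X" "f y = c Y" using adj[OF that] fw by auto
    then show "f x \<noteq> f y" using c2 that by simp
  qed
  show ?thesis
  proof (intro exI[of _ f] conjI ballI)
    fix v assume "v \<in> V"
    then have "witness_set V F v \<in> ?VT" unfolding witness_structure_def by simp
    then show "f v \<in> {1,2,3}" using c1 unfolding f_def by blast
  next
    show "compatible V E F f" unfolding compatible_def
    proof (intro conjI)
      show "\<forall>W\<in>?VT. \<forall>x\<in>W. \<forall>y\<in>W. f x = f y" using fw by simp
    next
      show "\<forall>X Y. {X, Y} \<in> ?ET \<and> big X \<and> big Y \<longrightarrow> (\<forall>x\<in>X. \<forall>y\<in>Y. f x \<noteq> f y)"
        using sep by blast
    next
      show "\<forall>p. cable_path ?VT ?ET p \<and> length p \<ge> 3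
         \<and> big (hd p) \<and> big (last p) \<and> (\<forall>i. 0 < i \<and> i + 1 < length p \<longrightarrow> \<not> big (p ! i))
         \<longrightarrow> (\<forall>x\<in>p ! 0. \<forall>y\<in>p ! 1. f x \<noteq> f y)
           \<and> (\<forall>x\<in>p ! (length p - 1). \<forall>y\<in>p ! (length p - 2). f x \<noteq> f y)"
      proof (intro allI impI)
      fix p assume h: "cable_path ?VT ?ET p \<and> 3 \<le> length p \<and> big (hd p) \<and> big (last p) \<and>
        (\<forall>i. 0 < i \<and> i + 1 < length p \<longrightarrow> \<not> big (p ! i))"
      have "0 + 1 < length p" using h by simp
      then have e1: "{p!0, p!(0+1)} \<in> ?ET" using h unfolding cable_path_def by blast
      have e2: "{p!(length p - 2), p!(length p - 1)} \<in> ?ET"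
      proof -
        have "length p - 2 + 1 < length p" "length p - 2 + 1 = length p - 1" using h by auto
        then show ?thesis using h unfolding cable_path_def by (metis (no_types, lifting))
      qed
      show "(\<forall>x\<in>p ! 0. \<forall>y\<in>p ! 1. f x \<noteq> f y) \<and> (\<forall>x\<in>p ! (length p - 1). \<forall>y\<in>p ! (length p - 2). f x \<noteq> f y)"
      proof
        show "\<forall>x\<in>p ! 0. \<forall>y\<in>p ! 1. f x \<noteq> f y" using sep[OF e1] by simp
        have "{p!(length p - 1), p!(length p - 2)} \<in> ?ET" using e2 by (simp add: insert_commute)
        then show "\<forall>x\<in>p ! (length p - 1). \<forall>y\<in>p ! (length p - 2). f x \<noteq> f y" by (rule sep)
      qed
    qed
    qed
  qed
qed

end
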